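(* Let $\mathcal A$ be a finite alphabet and $\Psi: \mathcal A^*\to \mathcal A^*$. Then $\Psi$ is a symmetry if and only if $\Psi$ is a morphism or an antimorphism whose restriction to $\mathcal A$ is a permutation of the letters of $\mathcal A$.
   Context: A symmetry on $\mathcal A^*$ is a map $\Psi:\mathcal A^*\to\mathcal A^*$ such that (1) $\Psi$ is a bijection and (2) for all $w,v\in\mathcal A^*$, the number of occurrences of $w$ in $v$ equals the number of occurrences of $\Psi(w)$ in $\Psi(v)$ (an occurrence of $w$ in $v=v_1\cdots v_m$ is an index $i$ such that $w$ is a prefix of $v_iv_{i+1}\cdots v_m$). $\Psi$ is a morphism if $\Psi(vw)=\Psi(v)\Psi(w)$ and an antimorphism if $\Psi(vw)=\Psi(w)\Psi(v)$ for all $v,w\in\mathcal A^*$. *)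

theory Defs
  imports Main
begin

text \<open>An occurrence of w in v = v_1...v_m is an
index i (1 \<le> i \<le> m) such that w is a prefix of v_i...v_m; with 0-based indexing
this is i < length v with w a prefix of drop i v, i.e. take (length w) (drop i v) = w.\<close>

definition occ :: "'a list \<Rightarrow> 'a list \<Rightarrow> nat" where
  "occ w v = card {i. i < length v \<and> take (length w) (drop i v) = w}"

definition symmetry :: "('a list \<Rightarrow> 'a list) \<Rightarrow> bool" where
  "symmetry \<Psi> \<longleftrightarrow> bij \<Psi> \<and> (\<forall>w v. occ w v = occ (\<Psi> w) (\<Psi> v))"

definition morphism :: "('a list \<Rightarrow> 'a list) \<Rightarrow> bool" where
  "morphism \<Psi> \<longleftrightarrow> (\<forall>v w. \<Psi> (v @ w) = \<Psi> v @ \<Psi> w)"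

definition antimorphism :: "('a list \<Rightarrow> 'a list) \<Rightarrow> bool" where
  "antimorphism \<Psi> \<longleftrightarrow> (\<forall>v w. \<Psi> (v @ w) = \<Psi> w @ \<Psi> v)"

definition restricts_to_letter_perm :: "('a list \<Rightarrow> 'a list) \<Rightarrow> bool" where
  "restricts_to_letter_perm \<Psi> \<longleftrightarrow> (\<exists>\<sigma>. bij \<sigma> \<and> (\<forall>a. \<Psi> [a] = [\<sigma> a]))"

end

theory Submission imports Defs "HOL-Library.Sublist" begin

lemma occ_Nil[simp]: "occ w [] = 0" by (simp add: occ_def)

lemma occ_Cons: "occ w (c#v) = (if take (length w) (c#v) = w then 1 else 0) + occ w v"
proof -
  let ?S = "{i. i < length v \<and> take (length w) (drop i v) = w}"
  have e: "{i. i < length (c#v) \<and> take (length w) (drop i (c#v)) = w} =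
        (if take (length w) (c#v) = w then {0} else {}) \<union> Suc ` ?S"
    by (auto simp: image_iff less_Suc_eq_0_disj)
  have "card ((if take (length w) (c#v) = w then {0} else {}) \<union> Suc ` ?S)
      = card (if take (length w) (c#v) = w then {0::nat} else {}) + card (Suc ` ?S)"
    by (rule card_Un_disjoint) auto
  also have "card (Suc ` ?S) = card ?S" by (simp add: card_image)
  finally show ?thesis unfolding occ_def e by simp
qed

lemma occ_Cons_prefix: "occ w (c#v) = (if prefix w (c#v) then 1 else 0) + occ w v"
  by (simp add: occ_Cons prefix_def) (metis append_eq_conv_conj)

lemma occ_Nil_left: "occ [] v = length v"
  by (induct v) (auto simp: occ_Cons)

lemma occ_self: "u \<noteq> [] \<Longrightarrow> occ u u \<ge> 1"
  by (cases u) (auto simp: occ_Cons)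

lemma occ_snoc: "occ w (v @ [c]) = occ w v + (if suffix w (v @ [c]) then 1 else 0)"
proof (induct v)
  case Nil thus ?case by (cases w) (auto simp: occ_Cons_prefix suffix_Cons)
next
  case (Cons d v)
  show ?case using Cons
    apply (simp only: append_Cons occ_Cons_prefix)
    apply (simp add: suffix_Cons prefix_snoc del: append_Cons)
    apply (simp only: append_Cons[symmetric] prefix_snoc)
    by (auto dest: suffix_length_le)
qed

lemma occ_rev: "occ (rev w) (rev v) = occ w v"
  by (induct v) (auto simp: occ_snoc occ_Cons_prefix suffix_to_prefix)

lemma occ_map: assumes "inj f" shows "occ (map f w) (map f v) = occ w v"
proof (induct v)
  case (Cons a v)
  have "take (length (map f w)) (map f (a#v)) = map f (take (length w) (a#v))"
    by (simp only: length_map take_map)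
  then have "(take (length (map f w)) (f a # map f v) = map f w) = (take (length w) (a#v) = w)"
    using assms by simp
  then show ?case using Cons occ_Cons[of "map f w" "f a" "map f v"] occ_Cons[of w a v] by simp
qed simp

lemma occ_short: "length v < length w \<Longrightarrow> occ w v = 0"
proof (induct v)
  case (Cons c v)
  have "take (length w) (c#v) \<noteq> w" using Cons(2) by (metis length_take min.absorb2 less_imp_le not_less_iff_gr_or_eq min_def)
  then show ?case using Cons by (simp add: occ_Cons)
qed simp


lemma occ_n: assumes "length u = Suc n" "length w = n" "n \<ge> 1"
  shows "occ w u = (if take n u = w then 1 else 0) + (if drop 1 u = w then 1 else 0)"
proof -
  obtain c u' where u: "u = c # u'" using assms by (cases u) auto
  obtain d u'' where u': "u' = d # u''" using assms u by (cases u') auto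
  have "occ w u'' = 0" using assms u u' by (intro occ_short) simp
  then show ?thesis using assms u u' by (simp add: occ_Cons)
qed

lemma occ_n1: assumes "length u = Suc (Suc n)" "length w = n" "n \<ge> 1"
  shows "occ w u = (if take n u = w then 1 else 0) + (if take n (drop 1 u) = w then 1 else 0)
     + (if drop 2 u = w then 1 else 0)"
proof -
  obtain c u' where u: "u = c # u'" using assms by (cases u) auto
  have "occ w u' = (if take n u' = w then 1 else 0) + (if drop 1 u' = w then 1 else 0)"
    using assms u by (intro occ_n) auto
  then show ?thesis using assms u by (simp add: occ_Cons)
qed

lemma eq_from_take_drop: assumes "length x = Suc n" "length v = Suc n" "n \<ge> 1"
  "take n x = take n v" "drop 1 x = drop 1 v" shows "x = v"
proof -
  obtain a X where x: "x = a # X" using assms by (cases x) auto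
  obtain b V where v: "v = b # V" using assms by (cases v) auto
  have "n = Suc (n - 1)" using assms by simp
  then have "a = b" using assms(4) x v by (metis list.inject take_Suc_Cons)
  then show ?thesis using assms x v by simp
qed

lemma aux1: "(if tx = P then 1 else 0) + (if dx = P then 1 else 0) = (1::nat) + (if S = P then 1 else 0) \<Longrightarrow>
  (if tx = S then 1 else 0) + (if dx = S then 1 else 0) = (if P = S then 1 else 0) + (1::nat) \<Longrightarrow>
  (tx = P \<and> dx = S) \<or> (tx = S \<and> dx = P \<and> P \<noteq> S)"
  by (cases "tx = P"; cases "dx = P"; cases "P = S"; cases "tx = S"; cases "dx = S"; simp)

lemma aux2: "(if B = A then 1 else 0) + (if A = A then 1 else 0) + (if B = A then 1 else 0) =
   (if A = A then 1 else 0) + (if B = A then 1 else 0) + (if A = A then (1::nat) else 0) \<Longrightarrow> A = B"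
  by (cases "A = B") auto

lemma det: assumes n: "n \<ge> 2" and lx: "length x = Suc n" and lv: "length v = Suc n"
  and H: "\<And>w. length w = n \<Longrightarrow> occ w x = occ w v"
  and H': "\<And>w. length w = n - 1 \<Longrightarrow> occ w x = occ w v"
  shows "x = v"
proof -
  obtain m where m: "n = Suc m" "m \<ge> 1" using n by (cases n) auto
  define P where "P = take n v"
  define S where "S = drop 1 v"
  have lP: "length P = n" "length S = n" using lv by (auto simp: P_def S_def)
  have E1: "occ P x = occ P v" "occ S x = occ S v" using H lP by auto
  have o1: "occ P x = (if take n x = P then 1 else 0) + (if drop 1 x = P then 1 else 0)"
    "occ S x = (if take n x = S then 1 else 0) + (if drop 1 x = S then 1 else 0)"
    "occ P v = (if take n v = P then 1 else 0) + (if drop 1 v = P then 1 else 0)"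
    "occ S v = (if take n v = S then 1 else 0) + (if drop 1 v = S then 1 else 0)"
    using occ_n[OF lx lP(1)] occ_n[OF lx lP(2)] occ_n[OF lv lP(1)] occ_n[OF lv lP(2)] m by auto
  have cases: "(take n x = P \<and> drop 1 x = S) \<or> (take n x = S \<and> drop 1 x = P \<and> P \<noteq> S)"
  proof -
    have "take n v = P" "drop 1 v = S" by (simp_all add: P_def S_def)
    then show ?thesis using aux1[of "take n x" P "drop 1 x" S] E1 o1 by simp
  qed
  then show ?thesis
  proof
    assume "take n x = P \<and> drop 1 x = S"
    then show ?thesis using eq_from_take_drop[of x n v] lx lv m unfolding P_def S_def by auto
  next
    assume c: "take n x = S \<and> drop 1 x = P \<and> P \<noteq> S"
    define A where "A = take m v"
    define B where "B = take m (drop 1 v)"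
    define C where "C = drop 2 v"
    have x1: "take m x = B" using c m unfolding B_def S_def
      by (metis min.absorb1 le_SucI order_refl take_take)
    have x2: "take m (drop 1 x) = A" using c m unfolding A_def P_def
      by (simp add: min_def)
    have x3: "drop 2 x = B" using c m unfolding B_def P_def
      by (metis drop_drop drop_take one_add_one diff_Suc_1)
    have x4: "take m (drop 1 x) = C" using c m unfolding C_def S_def
      by (metis drop_drop drop_take one_add_one diff_Suc_1)
    have AC: "A = C" using x2 x4 by simp
    have lA: "length A = m" using lv m by (simp add: A_def)
    have "occ A x = occ A v" using H' lA m by simp
    moreover have "occ A x = (if take m x = A then 1 else 0) + (if take m (drop 1 x) = A then 1 else 0)
     + (if drop 2 x = A then 1 else 0)" using occ_n1[of x m A] lx lA m by simp
    moreover have "occ A v = (if take m v = A then 1 else 0) + (if take m (drop 1 v) = A then 1 else 0)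
     + (if drop 2 v = A then 1 else 0)" using occ_n1[of v m A] lv lA m by simp
    moreover have "take m v = A" "take m (drop 1 v) = B" "drop 2 v = A" using AC by (simp_all add: A_def B_def C_def)
    ultimately have AB: "A = B" using x1 x2 x3 aux2[of B A] by simp
    have "P = take 1 v @ drop 1 P" unfolding P_def using m by (metis append_take_drop_id take_take min.absorb1 le_add1 plus_1_eq_Suc)
    also have "drop 1 P = B" unfolding P_def B_def using m by (simp add: drop_take)
    also have "take 1 v = take 1 A" unfolding A_def using m by (simp add: min_def)
    also have "take 1 A = take 1 (drop 1 v)" unfolding AB B_def using m by (simp add: min_def)
    also have "take 1 (drop 1 v) @ B = take 1 S @ drop 1 S" unfolding S_def using AB AC
      by (simp add: C_def numeral_2_eq_2)
    also have "\<dots> = S" by simp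
    finally show ?thesis using c by simp
  qed
qed


lemma sym_Nil: assumes "symmetry \<Psi>" shows "\<Psi> [] = []"
proof (rule ccontr)
  assume "\<Psi> [] \<noteq> []"
  then have "occ (\<Psi> []) (\<Psi> []) \<ge> 1" by (rule occ_self)
  moreover have "occ (\<Psi> []) (\<Psi> []) = occ [] []" using assms by (simp add: symmetry_def)
  ultimately show False by simp
qed

lemma sym_len: assumes "symmetry \<Psi>" shows "length (\<Psi> v) = length v"
proof -
  have "occ [] v = occ (\<Psi> []) (\<Psi> v)" using assms by (simp add: symmetry_def)
  then show ?thesis using sym_Nil[OF assms] by (simp add: occ_Nil_left)
qed

lemma sym_occ: "symmetry \<Psi> \<Longrightarrow> occ (\<Psi> w) (\<Psi> v) = occ w v"
  by (simp add: symmetry_def)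

lemma sym_inj: "symmetry \<Psi> \<Longrightarrow> \<Psi> u = \<Psi> v \<Longrightarrow> u = v"
  by (simp add: symmetry_def bij_def inj_eq)

lemma sym_comp: "symmetry f \<Longrightarrow> symmetry g \<Longrightarrow> symmetry (f \<circ> g)"
  by (auto simp: symmetry_def intro: bij_comp)

lemma sym_map: assumes "bij f" shows "symmetry (map f)"
proof -
  have "bij (map f)"
  proof -
    have i: "inj f" using assms bij_is_inj by blast
    have "map (inv f) (map f v) = v" for v using i by (simp add: map_idI inv_f_f)
    moreover have "map f (map (inv f) v) = v" for v using assms
      by (simp add: bij_is_surj surj_f_inv_f map_idI)
    ultimately show ?thesis by (metis bijI' )
  qed
  then show ?thesis using occ_map[OF bij_is_inj[OF assms]] by (simp add: symmetry_def)
qed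

lemma sym_rev: "symmetry rev"
proof -
  have "bij (rev :: 'a list \<Rightarrow> _)" by (metis bijI' rev_rev_ident)
  then show ?thesis by (auto simp: symmetry_def occ_rev)
qed

lemma len2: "length u = 2 \<Longrightarrow> \<exists>x y. u = [x, y]"
  by (cases u; cases "tl u") auto

lemma len3: "length u = 3 \<Longrightarrow> \<exists>x y z. u = [x, y, z]"
  by (cases u; cases "tl u"; cases "tl (tl u)") auto

lemma two_letter: assumes s: "symmetry \<Phi>" and L: "\<And>a. \<Phi> [a] = [a]"
  shows "\<Phi> [a,b] = [a,b] \<or> \<Phi> [a,b] = [b,a]"
proof -
  obtain x y where xy: "\<Phi> [a,b] = [x,y]" using len2[of "\<Phi> [a,b]"] sym_len[OF s, of "[a,b]"] by auto
  have cnt: "occ [c] [x,y] = occ [c] [a,b]" for c using sym_occ[OF s, of "[c]" "[a,b]"] L xy by simp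
  have c: "(if x = c then 1 else 0) + (if y = c then 1 else 0) = (if a = c then 1 else (0::nat)) + (if b = c then 1 else 0)" for c
    using cnt[of c] by (simp add: occ_Cons)
  from c[of a] c[of b] c[of x] c[of y] have "[x,y] = [a,b] \<or> [x,y] = [b,a]"
    by (cases "x = a"; cases "y = b"; cases "x = b"; cases "y = a"; cases "x = y"; cases "a = b"; simp)
  then show ?thesis using xy by simp
qed

lemma o3: "occ [p,q] [x,y,z] = (if [x,y] = [p,q] then 1 else 0) + (if [y,z] = [p,q] then 1 else (0::nat))"
  by (simp add: occ_Cons)
lemma sum1: "(if P then 1 else 0) + (if Q then 1 else (0::nat)) = 1 \<Longrightarrow> P \<or> Q" by (cases P; cases Q) auto
lemma no1: "a \<noteq> b \<Longrightarrow> b \<noteq> c \<Longrightarrow> a \<noteq> c \<Longrightarrow> occ [a,b] [x,y,z] = 1 \<Longrightarrow> occ [c,b] [x,y,z] = 1 \<Longrightarrow> False"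
proof -
  assume h: "a \<noteq> b" "b \<noteq> c" "a \<noteq> c" "occ [a,b] [x,y,z] = 1" "occ [c,b] [x,y,z] = 1"
  have "[x,y] = [a,b] \<or> [y,z] = [a,b]" using h(4) unfolding o3 by (rule sum1)
  moreover have "[x,y] = [c,b] \<or> [y,z] = [c,b]" using h(5) unfolding o3 by (rule sum1)
  ultimately show False using h(1,2,3) by (elim disjE) simp_all
qed
lemma no2: "a \<noteq> b \<Longrightarrow> b \<noteq> c \<Longrightarrow> a \<noteq> c \<Longrightarrow> occ [b,a] [x,y,z] = 1 \<Longrightarrow> occ [b,c] [x,y,z] = 1 \<Longrightarrow> False"
proof -
  assume h: "a \<noteq> b" "b \<noteq> c" "a \<noteq> c" "occ [b,a] [x,y,z] = 1" "occ [b,c] [x,y,z] = 1"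
  have "[x,y] = [b,a] \<or> [y,z] = [b,a]" using h(4) unfolding o3 by (rule sum1)
  moreover have "[x,y] = [b,c] \<or> [y,z] = [b,c]" using h(5) unfolding o3 by (rule sum1)
  ultimately show False using h(1,2,3) by (elim disjE) simp_all
qed

lemma prop3: assumes s: "symmetry \<Phi>" and L: "\<And>a. \<Phi> [a] = [a]"
  and ab: "a \<noteq> b" and bc: "b \<noteq> c"
  shows "\<Phi> [a,b] = [a,b] \<longleftrightarrow> \<Phi> [b,c] = [b,c]"
proof (cases "a = c")
  case True
  have "\<Phi> [a,b] \<noteq> \<Phi> [b,a]" using sym_inj[OF s] ab by blast
  moreover have "\<Phi> [a,b] = [a,b] \<or> \<Phi> [a,b] = [b,a]" by (rule two_letter[OF s L])
  moreover have "\<Phi> [b,a] = [b,a] \<or> \<Phi> [b,a] = [a,b]" by (rule two_letter[OF s L])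
  ultimately have "\<Phi> [a,b] = [a,b] \<longleftrightarrow> \<Phi> [b,a] = [b,a]"
    using ab by metis
  then show ?thesis using True by simp
next
  case False
  obtain x y z where xyz: "\<Phi> [a,b,c] = [x,y,z]" using len3[of "\<Phi> [a,b,c]"] sym_len[OF s, of "[a,b,c]"] by auto
  have "occ [a,b] [a,b,c] = 1" using ab bc False by (simp add: occ_Cons)
  then have 1: "occ (\<Phi> [a,b]) [x,y,z] = 1" using sym_occ[OF s, of "[a,b]" "[a,b,c]"] xyz by simp
  have "occ [b,c] [a,b,c] = 1" using ab bc False by (simp add: occ_Cons)
  then have 2: "occ (\<Phi> [b,c]) [x,y,z] = 1" using sym_occ[OF s, of "[b,c]" "[a,b,c]"] xyz by simp
  have t1: "\<Phi> [a,b] = [a,b] \<or> \<Phi> [a,b] = [b,a]" by (rule two_letter[OF s L])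
  have t2: "\<Phi> [b,c] = [b,c] \<or> \<Phi> [b,c] = [c,b]" by (rule two_letter[OF s L])
  have n1: "\<not> (\<Phi> [a,b] = [a,b] \<and> \<Phi> [b,c] = [c,b])"
    using no1[OF ab bc False, of x y z] 1 2 by metis
  have n2: "\<not> (\<Phi> [a,b] = [b,a] \<and> \<Phi> [b,c] = [b,c])"
    using no2[OF ab bc False, of x y z] 1 2 by metis
  have "[a,b] \<noteq> [b,a]" "[b,c] \<noteq> [c,b]" using ab bc by auto
  then show ?thesis using t1 t2 n1 n2 by metis

qed

lemma orient: assumes s: "symmetry \<Phi>" and L: "\<And>a. \<Phi> [a] = [a]"
  shows "(\<forall>a b. \<Phi> [a,b] = [a,b]) \<or> (\<forall>a b. \<Phi> [a,b] = [b,a])"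
proof (rule ccontr)
  assume "\<not> ?thesis"
  then obtain a b c d where 1: "\<Phi> [a,b] \<noteq> [a,b]" and 2: "\<Phi> [c,d] \<noteq> [d,c]" by auto
  have ab: "a \<noteq> b" and cd: "c \<noteq> d" using 1 2 two_letter[OF s L, of a b] two_letter[OF s L, of c d] by auto
  have "\<Phi> [a,b] = [a,b] \<longleftrightarrow> \<Phi> [c,d] = [c,d]"
  proof (cases "c = b")
    case True then show ?thesis using prop3[OF s L ab, of d] cd by simp
  next
    case cb: False
    show ?thesis
    proof (cases "c = a")
      case True then show ?thesis using prop3[OF s L ab, of a] prop3[OF s L, of b a d] ab cd by auto
    next
      case False then show ?thesis using prop3[OF s L ab, of c] prop3[OF s L, of b c d] cb cd by auto
    qed
  qed
  then show False using 1 2 two_letter[OF s L, of a b] two_letter[OF s L, of c d] by auto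
qed

lemma sym_id: assumes s: "symmetry \<Phi>" and L: "\<And>a. \<Phi> [a] = [a]" and L2: "\<And>a b. \<Phi> [a,b] = [a,b]"
  shows "\<Phi> v = v"
proof -
  have "\<forall>v. length v \<le> n \<longrightarrow> \<Phi> v = v" for n
  proof (induct n)
    case 0 then show ?case using sym_Nil[OF s] by auto
  next
    case (Suc n)
    show ?case
    proof (intro allI impI)
      fix v :: "'a list" assume lv: "length v \<le> Suc n"
      show "\<Phi> v = v"
      proof (cases "length v \<le> n")
        case True then show ?thesis using Suc by auto
      next
        case False
        then have lv': "length v = Suc n" using lv by simp
        show ?thesis
        proof (cases "n \<ge> 2")
          case True
          show ?thesis
          proof (rule det[OF True])
            show "length (\<Phi> v) = Suc n" "length v = Suc n" using sym_len[OF s] lv' by auto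
            fix w :: "'a list"
            assume "length w = n"
            then have "\<Phi> w = w" using Suc by auto
            then show "occ w (\<Phi> v) = occ w v" using sym_occ[OF s, of w v] by simp
          next
            fix w :: "'a list"
            assume "length w = n - 1"
            then have "\<Phi> w = w" using Suc by auto
            then show "occ w (\<Phi> v) = occ w v" using sym_occ[OF s, of w v] by simp
          qed
        next
          case False
          then have "length v = 1 \<or> length v = 2" using lv' by auto
          then show ?thesis
          proof
            assume "length v = 1" then obtain a where "v = [a]" by (cases v) auto
            then show ?thesis using L by simp
          next
            assume "length v = 2" then obtain a b where "v = [a,b]" using len2 by blast
            then show ?thesis using L2 by simp
          qed
        qed
      qed
    qed
  qed
  then show ?thesis by blast
qed


lemma fwd: fixes \<Psi> :: "'a list \<Rightarrow> 'a list" assumes s: "symmetry \<Psi>"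
  shows "(morphism \<Psi> \<or> antimorphism \<Psi>) \<and> restricts_to_letter_perm \<Psi>"
proof -
  define \<sigma> where "\<sigma> a = hd (\<Psi> [a])" for a
  have Ps: "\<Psi> [a] = [\<sigma> a]" for a
  proof -
    have "length (\<Psi> [a]) = 1" using sym_len[OF s] by simp
    then show ?thesis unfolding \<sigma>_def by (cases "\<Psi> [a]") auto
  qed
  have "inj \<sigma>"
  proof (rule injI)
    fix a b assume "\<sigma> a = \<sigma> b"
    then have "\<Psi> [a] = \<Psi> [b]" using Ps by simp
    then have "[a] = [b]" by (rule sym_inj[OF s])
    then show "a = b" by simp
  qed
  moreover have "surj \<sigma>"
  proof -
    have "b \<in> range \<sigma>" for b
    proof -
      have "bij \<Psi>" using s by (simp add: symmetry_def)
      then have "surj \<Psi>" by (rule bij_is_surj)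
      then obtain u where u: "\<Psi> u = [b]" by (metis surjD)
      then have "length u = 1" using sym_len[OF s, of u] by simp
      then obtain a where a: "u = [a]" by (cases u) auto
      have "[\<sigma> a] = [b]" using u Ps[of a] unfolding a by simp
      then show ?thesis by auto
    qed
    then show ?thesis by auto
  qed
  ultimately have b\<sigma>: "bij \<sigma>" by (simp add: bij_def)
  have R: "restricts_to_letter_perm \<Psi>" unfolding restricts_to_letter_perm_def using b\<sigma> Ps by blast
  define \<Phi> where "\<Phi> = map (inv \<sigma>) \<circ> \<Psi>"
  have s\<Phi>: "symmetry \<Phi>" unfolding \<Phi>_def by (intro sym_comp sym_map bij_imp_bij_inv b\<sigma> s)
  have L: "\<Phi> [a] = [a]" for a unfolding \<Phi>_def using Ps b\<sigma> by (simp add: bij_is_inj inv_f_f)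
  have bk: "\<Psi> v = map \<sigma> (\<Phi> v)" for v
  proof -
    have "map \<sigma> (map (inv \<sigma>) u) = u" for u
      using b\<sigma> by (simp add: bij_is_surj surj_f_inv_f map_idI)
    then show ?thesis unfolding \<Phi>_def by simp
  qed
  from orient[OF s\<Phi> L] show ?thesis
  proof
    assume "\<forall>a b. \<Phi> [a,b] = [a,b]"
    then have "\<Phi> v = v" for v using sym_id[OF s\<Phi> L] by blast
    then have "\<Psi> v = map \<sigma> v" for v using bk by simp
    then have "morphism \<Psi>" by (simp add: morphism_def)
    then show ?thesis using R by simp
  next
    assume A: "\<forall>a b. \<Phi> [a,b] = [b,a]"
    have s': "symmetry (rev \<circ> \<Phi>)" by (intro sym_comp sym_rev s\<Phi>)
    have rr: "rev (\<Phi> v) = v" for v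
      using sym_id[OF s', of v] by (simp add: L A)
    have "\<Phi> v = rev v" for v
      using rr[of v] by (metis rev_rev_ident)
    then have "\<Psi> v = map \<sigma> (rev v)" for v using bk by simp
    then have "antimorphism \<Psi>" by (simp add: antimorphism_def rev_map)
    then show ?thesis using R by simp
  qed
qed

theorem theorem13:
  fixes \<Psi> :: "'a::finite list \<Rightarrow> 'a list"
  shows "symmetry \<Psi> \<longleftrightarrow>
           ((morphism \<Psi> \<or> antimorphism \<Psi>) \<and> restricts_to_letter_perm \<Psi>)"
proof
  assume "symmetry \<Psi>" then show "(morphism \<Psi> \<or> antimorphism \<Psi>) \<and> restricts_to_letter_perm \<Psi>" by (rule fwd)
next
  assume A: "(morphism \<Psi> \<or> antimorphism \<Psi>) \<and> restricts_to_letter_perm \<Psi>"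
  then obtain \<sigma> where b: "bij \<sigma>" and Ps: "\<And>a. \<Psi> [a] = [\<sigma> a]"
    unfolding restricts_to_letter_perm_def by blast
  from A have "morphism \<Psi> \<or> antimorphism \<Psi>" by simp
  then show "symmetry \<Psi>"
  proof
    assume m: "morphism \<Psi>"
    have e: "\<Psi> [] = []" using m[unfolded morphism_def, rule_format, of "[]" "[]"]
      by (metis append_self_conv2 append_Nil2 append_same_eq self_append_conv)
    have "\<Psi> v = map \<sigma> v" for v
    proof (induct v)
      case (Cons a v)
      have "\<Psi> (a # v) = \<Psi> [a] @ \<Psi> v" using m[unfolded morphism_def, rule_format, of "[a]" v] by simp
      then show ?case using Cons Ps by simp
    qed (simp add: e)
    then have "\<Psi> = map \<sigma>" by blast
    then show ?thesis using sym_map[OF b] by simp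
  next
    assume m: "antimorphism \<Psi>"
    have e: "\<Psi> [] = []" using m[unfolded antimorphism_def, rule_format, of "[]" "[]"]
      by (metis append_self_conv2 append_Nil2 append_same_eq self_append_conv)
    have "\<Psi> v = (rev \<circ> map \<sigma>) v" for v
    proof (induct v)
      case (Cons a v)
      have "\<Psi> (a # v) = \<Psi> v @ \<Psi> [a]" using m[unfolded antimorphism_def, rule_format, of "[a]" v] by simp
      then show ?case using Cons Ps by simp
    qed (simp add: e)
    then have "\<Psi> = rev \<circ> map \<sigma>" by blast
    then show ?thesis using sym_comp[OF sym_rev sym_map[OF b]] by simp
  qed
qed

end
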